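(* If $G$ is the infinite king grid and $C\subseteq\mathbb{Z}^2$ is a solid-locating-dominating code in $G$, then the density $D(C)\ge 1/3$.
   Context: The infinite king grid $G=(V,E)$ has $V=\mathbb{Z}^2$, and distinct vertices $(u_1,u_2)$, $(v_1,v_2)$ are adjacent iff $|u_1-v_1|\le1$ and $|u_2-v_2|\le1$. Let $V_n=\{(x,y)\mid |x|\le n,|y|\le n\}$; the density of a code $C\subseteq V$ is $D(C)=\limsup_{n\to\infty}|C\cap V_n|/|V_n|$. $N[v]$ is the closed neighbourhood of $v$, and for a code $C$, $I(C;v)=N[v]\cap C$. A code $C$ is solid-locating-dominating if for all distinct $u,v\in V\setminus C$, $I(C;u)\setminus I(C;v)\ne\emptyset$. *)

theory Defs
  imports "HOL-Analysis.Analysis" "HOL-Library.Liminf_Limsup"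
begin

definition king_adj :: "int \<times> int \<Rightarrow> int \<times> int \<Rightarrow> bool" where
  "king_adj u v \<longleftrightarrow> u \<noteq> v \<and> \<bar>fst u - fst v\<bar> \<le> 1 \<and> \<bar>snd u - snd v\<bar> \<le> 1"

definition closed_nbhd :: "int \<times> int \<Rightarrow> (int \<times> int) set" where
  "closed_nbhd v = {u. u = v \<or> king_adj u v}"

definition I_set :: "(int \<times> int) set \<Rightarrow> int \<times> int \<Rightarrow> (int \<times> int) set" where
  "I_set C v = closed_nbhd v \<inter> C"

definition solid_locating_dominating :: "(int \<times> int) set \<Rightarrow> bool" where
  "solid_locating_dominating C \<longleftrightarrow>
     (\<forall>u v. u \<notin> C \<and> v \<notin> C \<and> u \<noteq> v \<longrightarrow> I_set C u - I_set C v \<noteq> {})"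

definition Vbox :: "nat \<Rightarrow> (int \<times> int) set" where
  "Vbox n = {(x, y). \<bar>x\<bar> \<le> int n \<and> \<bar>y\<bar> \<le> int n}"

definition density :: "(int \<times> int) set \<Rightarrow> ereal" where
  "density C = limsup (\<lambda>n. ereal (real (card (C \<inter> Vbox n)) / real (card (Vbox n))))"

end

theory Submission
  imports Defs "HOL-Real_Asymp.Real_Asymp"
begin

definition ind :: "bool \<Rightarrow> nat" where "ind b = (if b then 1 else 0)"

definition Wp :: "(int \<Rightarrow> int \<Rightarrow> bool) \<Rightarrow> int \<Rightarrow> int \<Rightarrow> int \<Rightarrow> int \<Rightarrow> nat" where
"Wp P x y a b = (if a = 0 \<or> b = 0 then min 2 (ind (P (x - b) (y + a)) + ind (P (x + b) (y - a))
    + ind (P (x + a - b) (y + b + a)) + ind (P (x + a + b) (y + b - a)))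
   else 2 - (ind (P (x + a) y) + ind (P x (y + b))))"

definition Gp :: "(int \<Rightarrow> int \<Rightarrow> bool) \<Rightarrow> int \<Rightarrow> int \<Rightarrow> int \<Rightarrow> int \<Rightarrow> nat" where
"Gp P x y a b = (if \<not> P x y \<and> P (x + a) (y + b) then Wp P x y a b else 0)"

lemma Gp_shift: "Gp P (x + s) (y + t) a b = Gp (\<lambda>i j. P (x + i) (y + j)) s t a b"
  unfolding Gp_def Wp_def by (simp add: algebra_simps)

lemma A_abs:
  fixes Q :: "int \<Rightarrow> int \<Rightarrow> bool"
  assumes "\<not> Q 0 0"
  and "\<not> Q 1 0 \<Longrightarrow> Q (-1) (-1) \<or> Q (-1) 0 \<or> Q (-1) 1"
  and "\<not> Q (-1) 0 \<Longrightarrow> Q 1 (-1) \<or> Q 1 0 \<or> Q 1 1"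
  and "\<not> Q 0 1 \<Longrightarrow> Q (-1) (-1) \<or> Q 0 (-1) \<or> Q 1 (-1)"
  and "\<not> Q 0 (-1) \<Longrightarrow> Q (-1) 1 \<or> Q 0 1 \<or> Q 1 1"
  and "\<not> Q 1 1 \<Longrightarrow> Q (-1) (-1) \<or> Q (-1) 0 \<or> Q (-1) 1 \<or> Q 0 (-1) \<or> Q 1 (-1)"
  and "\<not> Q 1 (-1) \<Longrightarrow> Q (-1) (-1) \<or> Q (-1) 0 \<or> Q (-1) 1 \<or> Q 0 1 \<or> Q 1 1"
  and "\<not> Q (-1) 1 \<Longrightarrow> Q (-1) (-1) \<or> Q 0 (-1) \<or> Q 1 (-1) \<or> Q 1 0 \<or> Q 1 1"
  and "\<not> Q (-1) (-1) \<Longrightarrow> Q (-1) 1 \<or> Q 0 1 \<or> Q 1 (-1) \<or> Q 1 0 \<or> Q 1 1"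
  shows "4 \<le> Gp Q 0 0 1 0 + Gp Q 0 0 (-1) 0 + Gp Q 0 0 0 1 + Gp Q 0 0 0 (-1)
     + Gp Q 0 0 1 1 + Gp Q 0 0 1 (-1) + Gp Q 0 0 (-1) 1 + Gp Q 0 0 (-1) (-1)"
  using assms unfolding Gp_def Wp_def ind_def
  by (cases "Q 1 0"; cases "Q (-1) 0"; cases "Q 0 1"; cases "Q 0 (-1)"; cases "Q 1 1";
      cases "Q 1 (-1)"; cases "Q (-1) 1"; cases "Q (-1) (-1)"; simp)

lemma B_abs:
  fixes Q :: "int \<Rightarrow> int \<Rightarrow> bool"
  assumes "Q 0 0"
  shows "Gp Q (-1) 0 1 0 + Gp Q 1 0 (-1) 0 + Gp Q 0 (-1) 0 1 + Gp Q 0 1 0 (-1)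
     + Gp Q (-1) (-1) 1 1 + Gp Q (-1) 1 1 (-1) + Gp Q 1 (-1) (-1) 1 + Gp Q 1 1 (-1) (-1) \<le> 8"
  using assms unfolding Gp_def Wp_def ind_def
  by (cases "Q 1 0"; cases "Q (-1) 0"; cases "Q 0 1"; cases "Q 0 (-1)"; cases "Q 1 1";
      cases "Q 1 (-1)"; cases "Q (-1) 1"; cases "Q (-1) (-1)"; simp)


definition dirs :: "(int \<times> int) set" where
  "dirs = {(1,0),(-1,0),(0,1),(0,-1),(1,1),(1,-1),(-1,1),(-1,-1)}"

lemma finite_dirs: "finite dirs" by (simp add: dirs_def)

lemma closed_nbhd_iff: "c \<in> closed_nbhd (x, y) \<longleftrightarrow> \<bar>fst c - x\<bar> \<le> 1 \<and> \<bar>snd c - y\<bar> \<le> 1"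
  unfolding closed_nbhd_def king_adj_def by (cases c) auto

lemma sld_local:
  assumes sld: "solid_locating_dominating C"
    and u: "(x, y) \<notin> C" and v: "(x + a, y + b) \<notin> C" and ne: "(a, b) \<noteq> (0, 0)"
  shows "\<exists>i\<in>{-1,0,1}. \<exists>j\<in>{-1,0,1}. \<not> (\<bar>i - a\<bar> \<le> 1 \<and> \<bar>j - b\<bar> \<le> 1) \<and> (x + i, y + j) \<in> C"
proof -
  have "(x, y) \<noteq> (x + a, y + b)" using ne by auto
  then have "I_set C (x, y) - I_set C (x + a, y + b) \<noteq> {}"
    using sld u v unfolding solid_locating_dominating_def by blast
  then obtain p q where pq: "(p, q) \<in> C" "(p, q) \<in> closed_nbhd (x, y)" "(p, q) \<notin> closed_nbhd (x + a, y + b)"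
    unfolding I_set_def by auto
  from pq have b1: "\<bar>p - x\<bar> \<le> 1" "\<bar>q - y\<bar> \<le> 1" "\<not> (\<bar>p - (x + a)\<bar> \<le> 1 \<and> \<bar>q - (y + b)\<bar> \<le> 1)"
    by (auto simp: closed_nbhd_iff)
  define i where "i = p - x"
  define j where "j = q - y"
  have "i \<in> {-1,0,1}" "j \<in> {-1,0,1}" using b1 unfolding i_def j_def by auto
  moreover have "\<not> (\<bar>i - a\<bar> \<le> 1 \<and> \<bar>j - b\<bar> \<le> 1)" using b1 unfolding i_def j_def
    by (smt (verit))
  moreover have "(x + i, y + j) \<in> C" using pq unfolding i_def j_def by simp
  ultimately show ?thesis by blast
qed

lemma A_conc:
  assumes sld: "solid_locating_dominating C" and u: "(x, y) \<notin> C"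
  shows "4 \<le> (\<Sum>e\<in>dirs. Gp (\<lambda>i j. (i, j) \<in> C) x y (fst e) (snd e))"
proof -
  define Q where "Q = (\<lambda>i j. (x + i, y + j) \<in> C)"
  have eq: "Gp (\<lambda>i j. (i, j) \<in> C) x y a b = Gp Q 0 0 a b" for a b
    using Gp_shift[of "\<lambda>i j. (i, j) \<in> C" x 0 y 0 a b] unfolding Q_def by simp
  have L: "\<lbrakk>\<not> Q a b; (a, b) \<noteq> (0, 0)\<rbrakk> \<Longrightarrow>
     \<exists>i\<in>{-1,0,1}. \<exists>j\<in>{-1,0,1}. \<not> (\<bar>i - a\<bar> \<le> 1 \<and> \<bar>j - b\<bar> \<le> 1) \<and> Q i j" for a b
    using sld_local[OF sld u, of a b] unfolding Q_def by simp
  have "4 \<le> Gp Q 0 0 1 0 + Gp Q 0 0 (-1) 0 + Gp Q 0 0 0 1 + Gp Q 0 0 0 (-1)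
     + Gp Q 0 0 1 1 + Gp Q 0 0 1 (-1) + Gp Q 0 0 (-1) 1 + Gp Q 0 0 (-1) (-1)"
  proof (rule A_abs)
    show "\<not> Q 0 0" using u unfolding Q_def by simp
    show "\<not> Q 1 0 \<Longrightarrow> Q (-1) (-1) \<or> Q (-1) 0 \<or> Q (-1) 1" using L[of 1 0] by auto
    show "\<not> Q (-1) 0 \<Longrightarrow> Q 1 (-1) \<or> Q 1 0 \<or> Q 1 1" using L[of "-1" 0] by auto
    show "\<not> Q 0 1 \<Longrightarrow> Q (-1) (-1) \<or> Q 0 (-1) \<or> Q 1 (-1)" using L[of 0 1] by auto
    show "\<not> Q 0 (-1) \<Longrightarrow> Q (-1) 1 \<or> Q 0 1 \<or> Q 1 1" using L[of 0 "-1"] by auto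
    show "\<not> Q 1 1 \<Longrightarrow> Q (-1) (-1) \<or> Q (-1) 0 \<or> Q (-1) 1 \<or> Q 0 (-1) \<or> Q 1 (-1)" using L[of 1 1] by auto
    show "\<not> Q 1 (-1) \<Longrightarrow> Q (-1) (-1) \<or> Q (-1) 0 \<or> Q (-1) 1 \<or> Q 0 1 \<or> Q 1 1" using L[of 1 "-1"] by auto
    show "\<not> Q (-1) 1 \<Longrightarrow> Q (-1) (-1) \<or> Q 0 (-1) \<or> Q 1 (-1) \<or> Q 1 0 \<or> Q 1 1" using L[of "-1" 1] by auto
    show "\<not> Q (-1) (-1) \<Longrightarrow> Q (-1) 1 \<or> Q 0 1 \<or> Q 1 (-1) \<or> Q 1 0 \<or> Q 1 1" using L[of "-1" "-1"] by auto
  qed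
  then show ?thesis by (simp add: dirs_def eq)
qed

lemma B_conc:
  assumes c: "(x, y) \<in> C"
  shows "(\<Sum>e\<in>dirs. Gp (\<lambda>i j. (i, j) \<in> C) (x - fst e) (y - snd e) (fst e) (snd e)) \<le> 8"
proof -
  define Q where "Q = (\<lambda>i j. (x + i, y + j) \<in> C)"
  have eq: "Gp (\<lambda>i j. (i, j) \<in> C) (x - a) (y - b) a b = Gp Q (- a) (- b) a b" for a b
    using Gp_shift[of "\<lambda>i j. (i, j) \<in> C" x "-a" y "-b" a b] unfolding Q_def by simp
  have "Gp Q (-1) 0 1 0 + Gp Q 1 0 (-1) 0 + Gp Q 0 (-1) 0 1 + Gp Q 0 1 0 (-1)
     + Gp Q (-1) (-1) 1 1 + Gp Q (-1) 1 1 (-1) + Gp Q 1 (-1) (-1) 1 + Gp Q 1 1 (-1) (-1) \<le> 8"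
    by (rule B_abs) (use c in \<open>simp add: Q_def\<close>)
  then show ?thesis by (simp add: dirs_def eq)
qed



lemma card_Vbox: "card (Vbox n) = (2 * n + 1) ^ 2"
proof -
  have "Vbox n = {- int n..int n} \<times> {- int n..int n}"
    unfolding Vbox_def by auto
  then have "card (Vbox n) = nat (2 * int n + 1) * nat (2 * int n + 1)"
    by (simp add: card_cartesian_product)
  also have "nat (2 * int n + 1) = 2 * n + 1" by simp
  finally show ?thesis by (simp add: power2_eq_square)
qed

lemma finite_Vbox: "finite (Vbox n)"
proof -
  have "Vbox n = {- int n..int n} \<times> {- int n..int n}"
    unfolding Vbox_def by auto
  then show ?thesis by simp
qed

lemma count_step:
  assumes sld: "solid_locating_dominating C"
  shows "card (Vbox n - C) \<le> 2 * card (C \<inter> Vbox (Suc n))"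
proof -
  define P where "P = (\<lambda>i j. (i, j) \<in> C)"
  define F where "F = (\<lambda>u e. Gp P (fst u) (snd u) (fst e) (snd e))"
  define V where "V = Vbox n"
  define V' where "V' = C \<inter> Vbox (Suc n)"
  have finV: "finite V" unfolding V_def by (rule finite_Vbox)
  have finV': "finite V'" unfolding V'_def using finite_Vbox by blast
  have "4 * card (V - C) = (\<Sum>u\<in>V - C. 4)" by simp
  also have "\<dots> \<le> (\<Sum>u\<in>V - C. \<Sum>e\<in>dirs. F u e)"
  proof (rule sum_mono)
    fix u assume "u \<in> V - C"
    then show "4 \<le> (\<Sum>e\<in>dirs. F u e)"
      using A_conc[OF sld, of "fst u" "snd u"] unfolding F_def P_def by simp
  qed
  also have "\<dots> \<le> (\<Sum>u\<in>V. \<Sum>e\<in>dirs. F u e)"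
    by (rule sum_mono2) (use finV in auto)
  also have "\<dots> = (\<Sum>e\<in>dirs. \<Sum>u\<in>V. F u e)" by (rule sum.swap)
  also have "\<dots> \<le> (\<Sum>e\<in>dirs. \<Sum>c\<in>V'. F (fst c - fst e, snd c - snd e) e)"
  proof (rule sum_mono)
    fix e assume e: "e \<in> dirs"
    obtain a b where ab: "e = (a, b)" by (cases e)
    have bd: "\<bar>a\<bar> \<le> 1" "\<bar>b\<bar> \<le> 1" using e unfolding ab dirs_def by auto
    define T where "T = {u \<in> V. (fst u + a, snd u + b) \<in> C}"
    have "(\<Sum>u\<in>V. F u e) = (\<Sum>u\<in>T. F u e)"
      by (rule sum.mono_neutral_right) (auto simp: finV T_def F_def Gp_def P_def ab)
    also have "\<dots> \<le> (\<Sum>u\<in>(\<lambda>c. (fst c - a, snd c - b)) ` V'. F u e)"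
    proof (rule sum_mono2)
      show "finite ((\<lambda>c. (fst c - a, snd c - b)) ` V')" using finV' by simp
      show "T \<subseteq> (\<lambda>c. (fst c - a, snd c - b)) ` V'"
      proof
        fix u assume "u \<in> T"
        then have u: "u \<in> V" "(fst u + a, snd u + b) \<in> C" unfolding T_def by auto
        have "(fst u + a, snd u + b) \<in> V'"
          using u bd unfolding V_def V'_def Vbox_def by (cases u) auto
        moreover have "u = (fst (fst u + a, snd u + b) - a, snd (fst u + a, snd u + b) - b)" by simp
        ultimately show "u \<in> (\<lambda>c. (fst c - a, snd c - b)) ` V'" by blast
      qed
    qed simp
    also have "\<dots> = (\<Sum>c\<in>V'. F (fst c - a, snd c - b) e)"
      by (rule sum.reindex_cong[where l = "\<lambda>c. (fst c - a, snd c - b)"]) (auto simp: inj_on_def)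
    finally show "(\<Sum>u\<in>V. F u e) \<le> (\<Sum>c\<in>V'. F (fst c - fst e, snd c - snd e) e)" by (simp add: ab)
  qed
  also have "\<dots> = (\<Sum>c\<in>V'. \<Sum>e\<in>dirs. F (fst c - fst e, snd c - snd e) e)" by (rule sum.swap)
  also have "\<dots> \<le> (\<Sum>c\<in>V'. 8)"
  proof (rule sum_mono)
    fix c assume "c \<in> V'"
    then have "(fst c, snd c) \<in> C" unfolding V'_def by simp
    from B_conc[OF this] show "(\<Sum>e\<in>dirs. F (fst c - fst e, snd c - snd e) e) \<le> 8"
      unfolding F_def P_def by simp
  qed
  also have "\<dots> = 8 * card V'" by simp
  finally show ?thesis unfolding V_def V'_def by simp
qed

lemma count_main:
  assumes sld: "solid_locating_dominating C"
  shows "card (Vbox n) \<le> 3 * card (C \<inter> Vbox (Suc n))"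
proof -
  have fin: "finite (Vbox n)" by (rule finite_Vbox)
  have "card (Vbox n) = card (Vbox n \<inter> C) + card (Vbox n - C)"
    using card_Int_Diff[OF fin, of C] by simp
  also have "card (Vbox n \<inter> C) \<le> card (C \<inter> Vbox (Suc n))"
  proof (rule card_mono)
    show "finite (C \<inter> Vbox (Suc n))" using finite_Vbox[of "Suc n"] by simp
    show "Vbox n \<inter> C \<subseteq> C \<inter> Vbox (Suc n)" by (auto simp: Vbox_def)
  qed
  ultimately show ?thesis using count_step[OF sld, of n] by linarith
qed

theorem theorem11:
  fixes C :: "(int \<times> int) set"
  assumes "solid_locating_dominating C"
  shows "density C \<ge> ereal (1 / 3)"
proof -
  define g :: "nat \<Rightarrow> real" where "g = (\<lambda>n. (2 * real n - 1) ^ 2 / (3 * (2 * real n + 1) ^ 2))"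
  have gl0: "(\<lambda>n::nat. (2 * real n - 1) ^ 2 / (3 * (2 * real n + 1) ^ 2)) \<longlonglongrightarrow> 1 / 3"
    by real_asymp
  have gl: "g \<longlonglongrightarrow> 1 / 3" unfolding g_def by (rule gl0)
  have gl': "(\<lambda>n. ereal (g n)) \<longlonglongrightarrow> ereal (1 / 3)" using gl by (simp add: lim_ereal)
  have L: "limsup (\<lambda>n. ereal (g n)) = ereal (1 / 3)"
    by (rule lim_imp_Limsup[OF _ gl']) simp
  have ev: "\<forall>\<^sub>F n in sequentially. ereal (g n) \<le>
      ereal (real (card (C \<inter> Vbox n)) / real (card (Vbox n)))"
  proof (rule eventually_sequentiallyI[of 1])
    fix n :: nat assume "1 \<le> n"
    then obtain m where n: "n = Suc m" by (cases n) auto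
    have c: "real (card (Vbox m)) \<le> 3 * real (card (C \<inter> Vbox n))"
      using count_main[OF assms, of m] unfolding n by linarith
    have pos: "0 < real (card (Vbox n))" unfolding card_Vbox by simp
    have "g n = real (card (Vbox m)) / (3 * real (card (Vbox n)))"
      unfolding g_def card_Vbox n by (simp add: algebra_simps)
    also have "\<dots> \<le> real (card (C \<inter> Vbox n)) / real (card (Vbox n))"
      using c pos by (simp add: divide_simps)
    finally show "ereal (g n) \<le> ereal (real (card (C \<inter> Vbox n)) / real (card (Vbox n)))" by simp
  qed
  have "limsup (\<lambda>n. ereal (g n)) \<le> density C"
    unfolding density_def by (rule Limsup_mono[OF ev])
  then show ?thesis using L by simp
qed

end
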